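(* Let $N\ge 3$, $p>1$, and let $r_1\le r_2\le\dots\le r_N$ be arbitrary points of $[0,1]$. Define $\tilde\sigma\in S_N$ by $$\tilde\sigma(i)=\begin{cases}2i-1 & \text{if } i\le (N+1)/2,\\ 2N-2i+2 & \text{if } i>(N+1)/2.\end{cases}$$ Then the Hamiltonian cycle $h[\tilde\sigma]=(r_{\tilde\sigma(1)},r_{\tilde\sigma(2)},\dots,r_{\tilde\sigma(N)},r_{\tilde\sigma(1)})$ is optimal: $E(h[\tilde\sigma])\le E(h)$ for every Hamiltonian cycle $h$ of $\mathcal K_N$. Equivalently, the minimal cost equals $|r_2-r_1|^p+|r_N-r_{N-1}|^p+\sum_{i=1}^{N-2}|r_{i+2}-r_i|^p$.
   Context: The points $r_1,\dots,r_N$ are the vertices of the complete graph $\mathcal K_N$. For $p\in\mathbb R$ the weight of the edge $\{r_i,r_j\}$ is $w_{ij}=|r_i-r_j|^p$, and the cost of a Hamiltonian cycle $h$ is $E(h)=\sum_{e\in h}w_e$. For a permutation $\sigma\in S_N$, $h[\sigma]$ denotes the Hamiltonian cycle with edges $\{r_{\sigma(i)},r_{\sigma(i+1)}\}$, $i=1,\dots,N$, where $\sigma(N+1):=\sigma(1)$. *)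

theory Defs
  imports Complex_Main "HOL-Combinatorics.Permutations"
begin

text \<open>Points are indexed 1..N as r 1, ..., r N. Edge weight |r i - r j| powr p.\<close>

definition edge_weight :: "(nat \<Rightarrow> real) \<Rightarrow> real \<Rightarrow> nat \<Rightarrow> nat \<Rightarrow> real" where
  "edge_weight r p i j = \<bar>r i - r j\<bar> powr p"

definition cycle_cost :: "(nat \<Rightarrow> real) \<Rightarrow> real \<Rightarrow> nat \<Rightarrow> (nat \<Rightarrow> nat) \<Rightarrow> real" where
  "cycle_cost r p N \<sigma> =
     (\<Sum>i=1..N. edge_weight r p (\<sigma> i) (\<sigma> (if i = N then 1 else i + 1)))"

definition sigma_tilde :: "nat \<Rightarrow> nat \<Rightarrow> nat" where
  "sigma_tilde N i =
     (if i < 1 \<or> i > N then i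
      else if 2 * i \<le> N + 1 then 2 * i - 1
      else 2 * N - 2 * i + 2)"

end

theory Submission
  imports Defs "HOL-Analysis.Analysis"
begin


lemma convex_incr:
  fixes f :: "real \<Rightarrow> real"
  assumes cv: "convex_on I f" and xI: "x \<in> I" and yI: "y + h \<in> I"
    and xy: "x \<le> y" and h: "h \<ge> 0"
  shows "f (x + h) + f y \<le> f x + f (y + h)"
proof (cases "y - x + h = 0")
  case True
  then have "h = 0" "y = x" using xy h by auto
  then show ?thesis by simp
next
  case False
  define D where "D = y - x + h"
  have Dp: "D > 0" using False xy h D_def by auto
  define \<mu> where "\<mu> = (y - x) / D"
  have m0: "0 \<le> \<mu>" "\<mu> \<le> 1" using Dp xy h by (auto simp: \<mu>_def D_def field_simps)
  have mD: "\<mu> * D = y - x" using Dp by (simp add: \<mu>_def)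
  have e1: "x + h = (1 - \<mu>) *\<^sub>R (y + h) + \<mu> *\<^sub>R x"
    using mD unfolding D_def by (simp add: algebra_simps)
  have e2: "y = (1 - \<mu>) *\<^sub>R x + \<mu> *\<^sub>R (y + h)"
    using mD unfolding D_def by (simp add: algebra_simps)
  have "f (x + h) \<le> (1 - \<mu>) * f (y + h) + \<mu> * f x"
    unfolding e1 by (rule convex_onD[OF cv m0 yI xI])
  moreover have "f y \<le> (1 - \<mu>) * f x + \<mu> * f (y + h)"
    apply (subst e2) by (rule convex_onD[OF cv m0 xI yI])
  ultimately show ?thesis by (simp add: algebra_simps)
qed

lemma powr_superadd:
  fixes a b p :: real
  assumes "a \<ge> 0" "b \<ge> 0" "p \<ge> 1"
  shows "a powr p + b powr p \<le> (a + b) powr p"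
proof (cases "a + b = 0")
  case True then have "a = 0" "b = 0" using assms by auto
  then show ?thesis by simp
next
  case False
  define s where "s = a + b"
  have sp: "s > 0" using False assms s_def by auto
  have "a powr p = s powr p * (a / s) powr p"
    using sp assms by (simp add: powr_mult[symmetric])
  also have "\<dots> \<le> s powr p * (a / s)"
  proof (rule mult_left_mono)
    have "(a/s) powr p \<le> (a/s) powr 1"
      using assms sp by (intro powr_mono') (auto simp: s_def field_simps)
    then show "(a / s) powr p \<le> a / s" using assms sp by simp
  qed simp
  finally have 1: "a powr p \<le> s powr p * (a / s)" .
  have "b powr p = s powr p * (b / s) powr p"
    using sp assms by (simp add: powr_mult[symmetric])
  also have "\<dots> \<le> s powr p * (b / s)"
  proof (rule mult_left_mono)
    have "(b/s) powr p \<le> (b/s) powr 1"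
      using assms sp by (intro powr_mono') (auto simp: s_def field_simps)
    then show "(b / s) powr p \<le> b / s" using assms sp by simp
  qed simp
  finally have 2: "b powr p \<le> s powr p * (b / s)" .
  have "s powr p * (a / s) + s powr p * (b / s) = s powr p * ((a + b) / s)"
    by (simp add: add_divide_distrib distrib_left)
  also have "\<dots> = s powr p" using sp by (simp add: s_def)
  finally have "s powr p * (a / s) + s powr p * (b / s) = s powr p" .
  then have "a powr p + b powr p \<le> s powr p" using 1 2 by linarith
  then show ?thesis by (simp add: s_def)
qed

lemma powr_incr:
  fixes A B h p :: real
  assumes "0 \<le> A" "A \<le> B" "h \<ge> 0" "p \<ge> 1"
  shows "(A + h) powr p + B powr p \<le> A powr p + (B + h) powr p"
proof (cases "A = 0")
  case True
  then show ?thesis using powr_superadd[of h B p] assms by (simp add: add.commute)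
next
  case False
  then show ?thesis
    using convex_incr[OF powr_convex[OF assms(4)], of A B h] assms by auto
qed



lemma real_key:
  fixes u v u2 v2 x p :: real
  assumes "u \<le> v" "u \<le> u2" "u2 \<le> v2" "v \<le> v2" "v2 \<le> x" "p \<ge> 1"
  shows "(x-u2) powr p + (x-v2) powr p - (v2-u2) powr p \<le> (x-u) powr p + (x-v) powr p - (v-u) powr p"
proof -
  have 1: "(x-v2) powr p \<le> (x-v) powr p" using assms by (intro powr_mono2) auto
  have 2: "(v-u) powr p \<le> (v2-u) powr p" using assms by (intro powr_mono2) auto
  have 3: "((v2-u2) + (u2-u)) powr p + (x-u2) powr p \<le> (v2-u2) powr p + ((x-u2) + (u2-u)) powr p"
    using assms by (intro powr_incr) auto
  have "(v2-u2) + (u2-u) = v2 - u" "(x-u2) + (u2-u) = x - u" by auto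
  then show ?thesis using 1 2 3 by simp
qed

lemma key_lt:
  assumes N: "N \<ge> 3" and p: "p \<ge> 1"
    and mono: "\<And>i j. 1 \<le> i \<Longrightarrow> i \<le> j \<Longrightarrow> j \<le> N \<Longrightarrow> r i \<le> r j"
    and ab: "1 \<le> a" "a < b" "b \<le> N - 1"
  shows "edge_weight r p (N-1) N + edge_weight r p N (N-2) - edge_weight r p (N-1) (N-2)
     \<le> edge_weight r p a N + edge_weight r p N b - edge_weight r p a b"
proof -
  have m1: "r a \<le> r b" "r a \<le> r (N-2)" "r (N-2) \<le> r (N-1)" "r b \<le> r (N-1)" "r (N-1) \<le> r N"
    using ab N by (auto intro!: mono)
  have "\<bar>r (N-1) - r N\<bar> = r N - r (N-1)" "\<bar>r N - r (N-2)\<bar> = r N - r (N-2)"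
     "\<bar>r (N-1) - r (N-2)\<bar> = r (N-1) - r (N-2)" "\<bar>r a - r N\<bar> = r N - r a"
     "\<bar>r N - r b\<bar> = r N - r b" "\<bar>r a - r b\<bar> = r b - r a" using m1 by auto
  then show ?thesis unfolding edge_weight_def
    using real_key[OF m1(1) m1(2) m1(3) m1(4) m1(5) p] by simp
qed

lemma edge_weight_sym: "edge_weight r p i j = edge_weight r p j i"
  unfolding edge_weight_def by (simp add: abs_minus_commute)

lemma key:
  assumes N: "N \<ge> 3" and p: "p \<ge> 1"
    and mono: "\<And>i j. 1 \<le> i \<Longrightarrow> i \<le> j \<Longrightarrow> j \<le> N \<Longrightarrow> r i \<le> r j"
    and ab: "a \<in> {1..N-1}" "b \<in> {1..N-1}" "a \<noteq> b"
  shows "edge_weight r p (N-1) N + edge_weight r p N (N-2) - edge_weight r p (N-1) (N-2)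
     \<le> edge_weight r p a N + edge_weight r p N b - edge_weight r p a b"
proof (cases "a < b")
  case True
  then show ?thesis using key_lt[where r=r and a=a and b=b, OF N p mono] ab by auto
next
  case False
  then have "b < a" using ab by auto
  then show ?thesis using key_lt[where r=r and a=b and b=a, OF N p mono] ab
    by (auto simp: edge_weight_sym[of r p N] edge_weight_sym[of r p b a])
qed



definition nx :: "nat \<Rightarrow> nat \<Rightarrow> nat" where "nx N i = (if i = N then 1 else i + 1)"

lemma nx_bij: assumes "N \<ge> 1" shows "bij_betw (nx N) {1..N} {1..N}"
  unfolding bij_betw_def
proof
  show "inj_on (nx N) {1..N}" by (auto simp: inj_on_def nx_def split: if_splits)
  show "nx N ` {1..N} = {1..N}"
  proof
    show "nx N ` {1..N} \<subseteq> {1..N}" using assms by (auto simp: nx_def)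
    show "{1..N} \<subseteq> nx N ` {1..N}"
    proof
      fix j assume j: "j \<in> {1..N}"
      show "j \<in> nx N ` {1..N}"
      proof (cases "j = 1")
        case True then show ?thesis using assms by (auto simp: nx_def intro!: image_eqI[of _ _ N])
      next
        case False then show ?thesis using j by (auto simp: nx_def intro!: image_eqI[of _ _ "j - 1"])
      qed
    qed
  qed
qed

lemma cost_nx: "cycle_cost r p N \<sigma> = (\<Sum>i=1..N. edge_weight r p (\<sigma> i) (\<sigma> (nx N i)))"
  unfolding cycle_cost_def nx_def by simp

lemma cost_rot: assumes "N \<ge> 1" shows "cycle_cost r p N (\<sigma> \<circ> nx N) = cycle_cost r p N \<sigma>"
  unfolding cost_nx using sum.reindex_bij_betw[OF nx_bij[OF assms],
      of "\<lambda>i. edge_weight r p (\<sigma> i) (\<sigma> (nx N i))"] by simp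

lemma cost_rotk: assumes "N \<ge> 1" shows "cycle_cost r p N (\<sigma> \<circ> (nx N ^^ k)) = cycle_cost r p N \<sigma>"
proof (induction k)
  case 0 then show ?case by simp
next
  case (Suc k)
  have "cycle_cost r p N (\<sigma> \<circ> (nx N ^^ Suc k)) = cycle_cost r p N ((\<sigma> \<circ> (nx N ^^ k)) \<circ> nx N)"
    by (simp only: funpow_Suc_right o_assoc)
  also have "\<dots> = cycle_cost r p N (\<sigma> \<circ> (nx N ^^ k))" by (rule cost_rot[OF assms])
  also have "\<dots> = cycle_cost r p N \<sigma>" by (rule Suc.IH)
  finally show ?case .
qed

lemma bij_powk: assumes "N \<ge> 1" shows "bij_betw (nx N ^^ k) {1..N} {1..N}"
proof (induction k)
  case 0 then show ?case by (simp add: bij_betw_def)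
next
  case (Suc k)
  show ?case by (simp only: funpow_Suc_right) (rule bij_betw_trans[OF nx_bij[OF assms] Suc.IH])
qed

lemma nx_pow: "j < N \<Longrightarrow> (nx N ^^ Suc j) N = Suc j"
proof (induction j)
  case 0 then show ?case by (simp add: nx_def)
next
  case (Suc j)
  then show ?case by (simp add: nx_def)
qed

definition opt :: "(nat \<Rightarrow> real) \<Rightarrow> real \<Rightarrow> nat \<Rightarrow> real" where
  "opt r p N = \<bar>r 2 - r 1\<bar> powr p + \<bar>r N - r (N - 1)\<bar> powr p
        + (\<Sum>i=1..N-2. \<bar>r (i + 2) - r i\<bar> powr p)"

lemma base2:
  assumes "bij_betw \<sigma> {1..2} {1..2}"
  shows "opt r p 2 \<le> cycle_cost r p 2 \<sigma>"
proof -
  have "\<sigma> 1 \<in> {1..2}" "\<sigma> 2 \<in> {1..2}"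
    using assms unfolding bij_betw_def by auto
  moreover have "\<sigma> 1 \<noteq> \<sigma> 2"
  proof
    assume "\<sigma> 1 = \<sigma> 2"
    from inj_onD[OF bij_betw_imp_inj_on[OF assms] this] show False by simp
  qed
  ultimately have "(\<sigma> 1 = 1 \<and> \<sigma> 2 = 2) \<or> (\<sigma> 1 = 2 \<and> \<sigma> 2 = 1)" by auto
  moreover have "cycle_cost r p 2 \<sigma> = edge_weight r p (\<sigma> 1) (\<sigma> 2) + edge_weight r p (\<sigma> 2) (\<sigma> 1)"
  proof -
    have e: "{1..2::nat} = {1,2}" by auto
    show ?thesis unfolding cycle_cost_def e by (simp add: numeral_2_eq_2)
  qed
  moreover have "opt r p 2 = edge_weight r p 1 2 + edge_weight r p 2 1"
    unfolding opt_def edge_weight_def by (simp add: abs_minus_commute)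
  ultimately show ?thesis by auto
qed

lemma step:
  fixes r :: "nat \<Rightarrow> real" and \<tau> :: "nat \<Rightarrow> nat"
  assumes N: "N = Suc (Suc (Suc k))" and p: "p \<ge> 1"
    and mono: "\<And>i j. 1 \<le> i \<Longrightarrow> i \<le> j \<Longrightarrow> j \<le> N \<Longrightarrow> r i \<le> r j"
    and bij: "bij_betw \<tau> {1..N} {1..N}" and tN: "\<tau> N = N"
    and IH: "opt r p (N - 1) \<le> cycle_cost r p (N - 1) \<tau>"
  shows "opt r p N \<le> cycle_cost r p N \<tau>"
proof -
  define W where "W = edge_weight r p"
  define m where "m = Suc k"
  have Nm: "N = Suc (Suc m)" using N m_def by simp
  have c1: "cycle_cost r p N \<tau> = (\<Sum>i=1..m. W (\<tau> i) (\<tau> (i+1))) + W (\<tau> (Suc m)) N + W N (\<tau> 1)"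
    unfolding cycle_cost_def Nm W_def using tN Nm
    by (simp add: sum.cl_ivl_Suc m_def)
  have c2: "cycle_cost r p (N-1) \<tau> = (\<Sum>i=1..m. W (\<tau> i) (\<tau> (i+1))) + W (\<tau> (Suc m)) (\<tau> 1)"
    unfolding cycle_cost_def Nm W_def
    by (simp add: sum.cl_ivl_Suc m_def)
  have o1: "opt r p N = opt r p (N - 1) - W (N-1) (N-2) + W (N-1) N + W N (N-2)"
    unfolding opt_def W_def edge_weight_def N
    by (simp add: sum.cl_ivl_Suc abs_minus_commute numeral_2_eq_2)
  have a: "\<tau> (Suc m) \<in> {1..N-1}" "\<tau> 1 \<in> {1..N-1}" "\<tau> (Suc m) \<noteq> \<tau> 1"
  proof -
    have b': "bij_betw \<tau> ({1..N} - {N}) ({1..N} - {N})"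
      using bij tN N by (intro bij_betw_DiffI) auto
    have e: "{1..N} - {N} = {1..N-1}" using N by auto
    from b' have inj: "inj_on \<tau> {1..N-1}" and im: "\<tau> ` {1..N-1} = {1..N-1}"
      unfolding e bij_betw_def by auto
    show "\<tau> (Suc m) \<in> {1..N-1}" "\<tau> 1 \<in> {1..N-1}" using im Nm by auto
    show "\<tau> (Suc m) \<noteq> \<tau> 1"
    proof
      assume eq: "\<tau> (Suc m) = \<tau> 1"
      have "Suc m = 1" by (rule inj_onD[OF inj eq]) (use Nm in auto)
      then show False using m_def by simp
    qed
  qed
  have K: "W (N-1) N + W N (N-2) - W (N-1) (N-2) \<le> W (\<tau> (Suc m)) N + W N (\<tau> 1) - W (\<tau> (Suc m)) (\<tau> 1)"
    unfolding W_def using key[where r=r, OF _ p mono a] N by simp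
  show ?thesis using c1 c2 o1 K IH by linarith
qed



lemma main:
  assumes "N \<ge> 2" "p \<ge> 1"
    and "\<And>i j. 1 \<le> i \<Longrightarrow> i \<le> j \<Longrightarrow> j \<le> N \<Longrightarrow> r i \<le> r j"
    and "bij_betw \<sigma> {1..N} {1..N}"
  shows "opt r p N \<le> cycle_cost r p N \<sigma>"
  using assms
proof (induction N arbitrary: \<sigma> rule: nat_induct_at_least)
  case base
  then show ?case using base2 by blast
next
  case (Suc n)
  define N where "N = Suc n"
  have bij: "bij_betw \<sigma> {1..N} {1..N}" using Suc N_def by simp
  have "N \<in> \<sigma> ` {1..N}" using bij N_def unfolding bij_betw_def by simp
  then obtain j where j: "j \<in> {1..N}" "\<sigma> j = N" by (metis imageE)
  then obtain j' where j': "j = Suc j'" "j' < N" by (cases j) auto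
  define \<tau> where "\<tau> = \<sigma> \<circ> (nx N ^^ j)"
  have tN: "\<tau> N = N" unfolding \<tau>_def using nx_pow[OF j'(2)] j j' by simp
  have btau: "bij_betw \<tau> {1..N} {1..N}" unfolding \<tau>_def
    using bij_betw_trans[OF bij_powk bij] N_def by simp
  have ctau: "cycle_cost r p N \<tau> = cycle_cost r p N \<sigma>" unfolding \<tau>_def
    using cost_rotk N_def by simp
  have b': "bij_betw \<tau> ({1..N} - {N}) ({1..N} - {N})"
    using btau tN N_def by (intro bij_betw_DiffI) auto
  have e: "{1..N} - {N} = {1..n}" using N_def by auto
  have IH: "opt r p n \<le> cycle_cost r p n \<tau>"
    using Suc.IH[of \<tau>] Suc.prems Suc.hyps b' e by simp
  obtain k where k: "N = Suc (Suc (Suc k))" using Suc.hyps N_def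
    by (metis Suc_le_D numeral_2_eq_2 Suc_le_mono)
  have "opt r p N \<le> cycle_cost r p N \<tau>"
    by (rule step[OF k Suc.prems(1) _ btau tN]) (use Suc.prems IH N_def in auto)
  then show ?case using ctau N_def by simp
qed

lemma st_inj: "inj_on (sigma_tilde N) {1..N}"
proof (rule inj_onI)
  fix i j assume i: "i \<in> {1..N}" and j: "j \<in> {1..N}" and eq: "sigma_tilde N i = sigma_tilde N j"
  show "i = j"
  proof (cases "2 * i \<le> N + 1")
    case ci: True
    show ?thesis
    proof (cases "2 * j \<le> N + 1")
      case True then show ?thesis using ci eq i j by (simp add: sigma_tilde_def)
    next
      case False
      then have "2 * i - 1 = 2 * N - 2 * j + 2" using ci eq i j by (simp add: sigma_tilde_def)
      moreover have "odd (2 * i - 1)" using i by auto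
      moreover have "2 * N - 2 * j + 2 = 2 * (N - j + 1)" by simp
      ultimately show ?thesis by (metis even_mult_iff even_numeral)
    qed
  next
    case ci: False
    show ?thesis
    proof (cases "2 * j \<le> N + 1")
      case True
      then have "2 * j - 1 = 2 * N - 2 * i + 2" using ci eq i j by (simp add: sigma_tilde_def)
      moreover have "odd (2 * j - 1)" using j by auto
      moreover have "2 * N - 2 * i + 2 = 2 * (N - i + 1)" by simp
      ultimately show ?thesis by (metis even_mult_iff even_numeral)
    next
      case False then show ?thesis using ci eq i j by (simp add: sigma_tilde_def)
    qed
  qed
qed

lemma st_permutes:
  assumes "N \<ge> 1" shows "sigma_tilde N permutes {1..N}"
proof (rule bij_imp_permutes)
  show "x \<notin> {1..N} \<Longrightarrow> sigma_tilde N x = x" for x by (auto simp: sigma_tilde_def)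
  have inj: "inj_on (sigma_tilde N) {1..N}" by (rule st_inj)
  have sub: "sigma_tilde N ` {1..N} \<subseteq> {1..N}"
    unfolding sigma_tilde_def by auto
  show "bij_betw (sigma_tilde N) {1..N} {1..N}"
    unfolding bij_betw_def using inj sub endo_inj_surj[of "{1..N}" "sigma_tilde N"] by auto
qed



lemma st_cost:
  assumes N: "N \<ge> 3"
  shows "cycle_cost r p N (sigma_tilde N) = opt r p N"
proof -
  define m where "m = (N + 1) div 2"
  have m: "2 \<le> m" "m < N" "2 * m \<le> N + 1" "N + 1 < 2 * (m + 1)" "N \<le> 2 * m"
    using N unfolding m_def by presburger+
  define s where "s = sigma_tilde N"
  define T where "T i = edge_weight r p (s i) (s (if i = N then 1 else i + 1))" for i
  define G where "G j = \<bar>r (j + 2) - r j\<bar> powr p" for j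
  define Od where "Od = {j \<in> {1..N-2}. odd j}"
  define Ev where "Ev = {j \<in> {1..N-2}. even j}"
  have cost: "cycle_cost r p N s = sum T {1..N}" unfolding cycle_cost_def T_def by simp
  have split: "sum T {1..N} = sum T {1..<m} + T m + sum T {Suc m..<N} + T N"
  proof -
    have "sum T {1..N} = sum T {1..<Suc N}" by (simp add: atLeastLessThanSuc_atLeastAtMost)
    also have "\<dots> = sum T {1..<N} + T N" using N by (simp add: sum.atLeastLessThan_Suc)
    also have "sum T {1..<N} = sum T {1..<m} + sum T {m..<N}"
      using m by (simp add: sum.atLeastLessThan_concat)
    also have "sum T {m..<N} = T m + sum T {Suc m..<N}"
      using m by (simp add: sum.atLeast_Suc_lessThan)
    finally show ?thesis by simp
  qed
  have T1: "T i = G (2 * i - 1)" if i: "i \<in> {1..<m}" for i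
  proof -
    have "s i = 2 * i - 1" using i m unfolding s_def sigma_tilde_def by auto
    moreover have "s (i + 1) = 2 * i + 1" using i m unfolding s_def sigma_tilde_def by auto
    moreover have "i \<noteq> N" using i m by auto
    moreover have "2 * i - 1 + 2 = 2 * i + 1" using i by auto
    ultimately show ?thesis unfolding T_def G_def edge_weight_def by (simp add: abs_minus_commute)
  qed
  have T2: "T i = G (2 * N - 2 * i)" if i: "i \<in> {Suc m..<N}" for i
  proof -
    have "s i = 2 * N - 2 * i + 2" using i m unfolding s_def sigma_tilde_def by auto
    moreover have "s (i + 1) = 2 * N - 2 * i" using i m unfolding s_def sigma_tilde_def by auto
    moreover have "i \<noteq> N" using i m by auto
    ultimately show ?thesis unfolding T_def G_def edge_weight_def by simp
  qed
  have Tm: "T m = \<bar>r N - r (N - 1)\<bar> powr p"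
  proof -
    have "s m = 2 * m - 1" using m unfolding s_def sigma_tilde_def by auto
    moreover have "s (m + 1) = 2 * N - 2 * m" using m unfolding s_def sigma_tilde_def by auto
    moreover have "m \<noteq> N" using m by auto
    moreover have "(2*m-1 = N \<and> 2*N-2*m = N-1) \<or> (2*m-1 = N-1 \<and> 2*N-2*m = N)"
      using N unfolding m_def by presburger
    ultimately show ?thesis unfolding T_def edge_weight_def by (auto simp: abs_minus_commute)
  qed
  have TN: "T N = \<bar>r 2 - r 1\<bar> powr p"
  proof -
    have "s N = 2" using N unfolding s_def sigma_tilde_def by auto
    moreover have "s 1 = 1" using N unfolding s_def sigma_tilde_def by auto
    ultimately show ?thesis unfolding T_def edge_weight_def by simp
  qed
  have bO: "bij_betw (\<lambda>i. 2 * i - 1) {1..<m} Od"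
    unfolding bij_betw_def
  proof
    show "inj_on (\<lambda>i. 2 * i - 1) {1..<m}" by (auto simp: inj_on_def)
    show "(\<lambda>i. 2 * i - 1) ` {1..<m} = Od"
    proof
      show "(\<lambda>i. 2 * i - 1) ` {1..<m} \<subseteq> Od" using m unfolding Od_def by auto
      show "Od \<subseteq> (\<lambda>i. 2 * i - 1) ` {1..<m}"
      proof
        fix j assume "j \<in> Od"
        then have j: "1 \<le> j" "j \<le> N - 2" "odd j" unfolding Od_def by auto
        then obtain t where t: "j = 2 * t + 1" by (metis oddE)
        have "t + 1 \<in> {1..<m}" using j t N unfolding m_def by auto
        moreover have "j = 2 * (t + 1) - 1" using t by simp
        ultimately show "j \<in> (\<lambda>i. 2 * i - 1) ` {1..<m}" by blast
      qed
    qed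
  qed
  have bE: "bij_betw (\<lambda>i. 2 * N - 2 * i) {Suc m..<N} Ev"
    unfolding bij_betw_def
  proof
    show "inj_on (\<lambda>i. 2 * N - 2 * i) {Suc m..<N}" by (auto simp: inj_on_def)
    show "(\<lambda>i. 2 * N - 2 * i) ` {Suc m..<N} = Ev"
    proof
      show "(\<lambda>i. 2 * N - 2 * i) ` {Suc m..<N} \<subseteq> Ev" using m unfolding Ev_def by auto
      show "Ev \<subseteq> (\<lambda>i. 2 * N - 2 * i) ` {Suc m..<N}"
      proof
        fix j assume "j \<in> Ev"
        then have j: "1 \<le> j" "j \<le> N - 2" "even j" unfolding Ev_def by auto
        then obtain t where t: "j = 2 * t" by (metis evenE)
        have "N - t \<in> {Suc m..<N}" using j t N unfolding m_def by auto
        moreover have "j = 2 * N - 2 * (N - t)" using t j by auto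
        ultimately show "j \<in> (\<lambda>i. 2 * N - 2 * i) ` {Suc m..<N}" by blast
      qed
    qed
  qed
  have s1: "sum T {1..<m} = sum G Od"
  proof -
    have "sum T {1..<m} = (\<Sum>i\<in>{1..<m}. G (2 * i - 1))" by (rule sum.cong[OF refl T1])
    also have "\<dots> = sum G Od" by (rule sum.reindex_bij_betw[OF bO])
    finally show ?thesis .
  qed
  have s2: "sum T {Suc m..<N} = sum G Ev"
  proof -
    have "sum T {Suc m..<N} = (\<Sum>i\<in>{Suc m..<N}. G (2 * N - 2 * i))" by (rule sum.cong[OF refl T2])
    also have "\<dots> = sum G Ev" by (rule sum.reindex_bij_betw[OF bE])
    finally show ?thesis .
  qed
  have s3: "sum G {1..N-2} = sum G Od + sum G Ev"
  proof -
    have "{1..N-2} = Od \<union> Ev" "Od \<inter> Ev = {}" unfolding Od_def Ev_def by auto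
    moreover have "finite Od" "finite Ev" unfolding Od_def Ev_def by auto
    ultimately show ?thesis by (simp add: sum.union_disjoint)
  qed
  show ?thesis unfolding s_def[symmetric] cost split s1 s2 Tm TN opt_def
    using s3 unfolding G_def by simp
qed


theorem proposition1:
  fixes N :: nat and p :: real and r :: "nat \<Rightarrow> real"
  assumes "N \<ge> 3" and "p > 1"
    and "\<And>i. 1 \<le> i \<Longrightarrow> i \<le> N \<Longrightarrow> r i \<in> {0..1}"
    and "\<And>i j. 1 \<le> i \<Longrightarrow> i \<le> j \<Longrightarrow> j \<le> N \<Longrightarrow> r i \<le> r j"
  shows "sigma_tilde N permutes {1..N}
    \<and> (\<forall>\<sigma>. \<sigma> permutes {1..N} \<longrightarrow> cycle_cost r p N (sigma_tilde N) \<le> cycle_cost r p N \<sigma>)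
    \<and> cycle_cost r p N (sigma_tilde N) =
        \<bar>r 2 - r 1\<bar> powr p + \<bar>r N - r (N - 1)\<bar> powr p
        + (\<Sum>i=1..N-2. \<bar>r (i + 2) - r i\<bar> powr p)"
proof (intro conjI allI impI)
  show "sigma_tilde N permutes {1..N}" using assms(1) by (intro st_permutes) simp
  have c: "cycle_cost r p N (sigma_tilde N) = opt r p N" using st_cost assms(1) by blast
  show "cycle_cost r p N (sigma_tilde N) =
        \<bar>r 2 - r 1\<bar> powr p + \<bar>r N - r (N - 1)\<bar> powr p
        + (\<Sum>i=1..N-2. \<bar>r (i + 2) - r i\<bar> powr p)" using c by (simp add: opt_def)
  fix \<sigma> assume "\<sigma> permutes {1..N}"
  then have "bij_betw \<sigma> {1..N} {1..N}" by (rule permutes_imp_bij)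
  then have "opt r p N \<le> cycle_cost r p N \<sigma>"
    using assms by (intro main) auto
  then show "cycle_cost r p N (sigma_tilde N) \<le> cycle_cost r p N \<sigma>" using c by simp
qed

end
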